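(* Let $\varepsilon\in(0,0.1]$ and $0<\ell\le r$. The number $R$ of while-loop iterations executed by Algorithm U on input $(\ell,r,\delta,\varepsilon,\gamma)$ satisfies $$R\ \le\ \widetilde R:=22\log^2(r/\ell)+44\log(r/\ell)\log(1/\varepsilon)+66\log(1/\varepsilon).$$
   Context: Logarithms are natural. Algorithm U (input $\ell,r,\delta,\varepsilon,\gamma$; absolute constant $C$; pricing query at $p$ reveals only $\mathbf 1\{v\ge p\}$ for a fresh $v$ from the unknown distribution): Let $S_1=\{(1+\varepsilon)^k\ell: k\in\mathbb{N}_0,\ (1+\varepsilon)^k\ell\le r\}$, $S_{can}=\emptyset$, $i=1$. While $|S_i|\ge 20$: let $\ell_i=\min S_i$, $r_i=\max S_i$, $a_i=\min\{p\in S_i: p>\ell_i+0.2(r_i-\ell_i)\}$, $b_i=\min\{p\in S_i:p>\ell_i+0.5(r_i-\ell_i)\}$. Post $b_i$ for $C\log(\widetilde R/\delta)\gamma^{-1}$ queries and let $\widehat q(b_i)$ be the empirical purchase fraction. If $\widehat q(b_i)<0.75\gamma$, set $S_{i+1}=S_i\cap[\ell_i,b_i]$, $i\leftarrow i+1$, continue. Otherwise add $a_i,b_i$ to $S_{can}$; for $p\in\{a_i,b_i\}$ post $p$ for $C\log(\widetilde R/\delta)\gamma^{-1}\varepsilon^{-2}$ queries and set $\widehat{\mathrm{Rev}}(p)=p\cdot$(empirical purchase fraction). If $(1+\varepsilon)\widehat{\mathrm{Rev}}(a_i)<(1-\varepsilon)\widehat{\mathrm{Rev}}(b_i)$ set $S_{i+1}=S_i\cap[a_i,r_i]$,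 else $S_{i+1}=S_i\cap[\ell_i,b_i]$; $i\leftarrow i+1$. After the loop $R=i-1$, all of $S_{R+1}$ is added to $S_{can}$, revenues of $S_{can}$ are re-estimated with $C\log(\widetilde R/\delta)\gamma^{-1}\varepsilon^{-2}$ queries each, and the empirical maximizer is output. *)

theory Defs
  imports Complex_Main
begin

definition grid :: "real \<Rightarrow> real \<Rightarrow> real \<Rightarrow> real set" where
  "grid l r eps = {p. \<exists>k::nat. p = (1 + eps) ^ k * l \<and> p \<le> r}"

definition pt_a :: "real set \<Rightarrow> real" where
  "pt_a S = Min {p \<in> S. p > Min S + 0.2 * (Max S - Min S)}"

definition pt_b :: "real set \<Rightarrow> real" where
  "pt_b S = Min {p \<in> S. p > Min S + 0.5 * (Max S - Min S)}"

definition step_left :: "real set \<Rightarrow> real set" where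
  "step_left S = S \<inter> {Min S .. pt_b S}"

definition step_right :: "real set \<Rightarrow> real set" where
  "step_right S = S \<inter> {pt_a S .. Max S}"

text \<open>S is a possible trajectory of the sets S_1, S_2, ... of Algorithm U: whatever the
  (random) query outcomes, each executed iteration (|S_i| \<ge> 20) replaces S_i by one of the
  two updates.\<close>
definition alg_U_trajectory :: "real \<Rightarrow> real \<Rightarrow> real \<Rightarrow> (nat \<Rightarrow> real set) \<Rightarrow> bool" where
  "alg_U_trajectory l r eps S \<longleftrightarrow>
     S 1 = grid l r eps \<and>
     (\<forall>i\<ge>1. card (S i) \<ge> 20 \<longrightarrow> S (Suc i) \<in> {step_left (S i), step_right (S i)})"

definition R_tilde :: "real \<Rightarrow> real \<Rightarrow> real \<Rightarrow> real" where
  "R_tilde l r eps = 22 * (ln (r / l))^2 + 44 * ln (r / l) * ln (1 / eps) + 66 * ln (1 / eps)"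

end

theory Submission
  imports Defs
begin

lemma grid_ge_l:
  assumes "0 < eps" "0 < l" "p \<in> grid l r eps" shows "l \<le> p"
proof -
  obtain k where k: "p = (1+eps)^k * l" using assms(3) unfolding grid_def by auto
  have "1 \<le> (1+eps)^k" using assms(1) by (simp add: one_le_power)
  then show ?thesis using k assms(2) by (simp add: mult_le_cancel_right1)
qed

lemma grid_finite:
  assumes "0 < eps" "0 < l" shows "finite (grid l r eps)"
proof -
  have "grid l r eps \<subseteq> (\<lambda>k. (1+eps)^k * l) ` {..nat \<lceil>r/(l*eps)\<rceil>}"
  proof
    fix p assume "p \<in> grid l r eps"
    then obtain k::nat where k: "p = (1+eps)^k * l" "p \<le> r" unfolding grid_def by auto
    have "1 + real k * eps \<le> (1+eps)^k" using Bernoulli_inequality[of eps k] assms by simp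
    hence "(1 + real k * eps) * l \<le> r" using k assms(2) by (meson mult_right_mono less_imp_le order_trans)
    hence "real k * eps * l \<le> r" using assms by (simp add: algebra_simps)
    hence "real k \<le> r/(l*eps)" using assms by (simp add: field_simps)
    hence "k \<le> nat \<lceil>r/(l*eps)\<rceil>" by linarith
    then show "p \<in> (\<lambda>k. (1+eps)^k * l) ` {..nat \<lceil>r/(l*eps)\<rceil>}" using k by auto
  qed
  then show ?thesis by (rule finite_subset) simp
qed

lemma card_span:
  assumes "0 < eps" "0 < l" "A \<subseteq> grid l r eps" "m \<in> grid l r eps" "M \<in> grid l r eps"
    "\<forall>p\<in>A. m \<le> p \<and> p \<le> M" "card A \<ge> 20"
  shows "M \<ge> m * (1+eps)^19"
proof -
  let ?q = "1+eps"
  obtain a where a: "m = ?q^a * l" using assms(4) unfolding grid_def by auto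
  obtain b where b: "M = ?q^b * l" using assms(5) unfolding grid_def by auto
  have q1: "1 < ?q" using assms(1) by simp
  have "A \<subseteq> (\<lambda>k. ?q^k * l) ` {a..b}"
  proof
    fix p assume p: "p \<in> A"
    then obtain k where k: "p = ?q^k * l" using assms(3) unfolding grid_def by auto
    have "?q^a \<le> ?q^k" using assms(6) p a k assms(2) by auto
    hence "a \<le> k" using q1 power_le_imp_le_exp by blast
    have "?q^k \<le> ?q^b" using assms(6) p b k assms(2) by auto
    hence "k \<le> b" using q1 power_le_imp_le_exp by blast
    show "p \<in> (\<lambda>k. ?q^k * l) ` {a..b}" using k \<open>a \<le> k\<close> \<open>k \<le> b\<close> by auto
  qed
  hence "card A \<le> card ((\<lambda>k. ?q^k * l) ` {a..b})" by (intro card_mono) auto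
  also have "\<dots> \<le> card {a..b}" by (rule card_image_le) simp
  finally have "a + 19 \<le> b" using assms(7) by simp
  hence "?q^(a+19) \<le> ?q^b" using q1 by (intro power_increasing) auto
  then show ?thesis using a b assms(2) by (simp add: power_add algebra_simps)
qed


lemma step_lemma:
  fixes S T :: "real set"
  assumes e: "0 < eps" "eps \<le> 0.1" and l: "0 < l"
    and fin: "finite S" and ne: "S \<noteq> {}"
    and contig: "S = grid l r eps \<inter> {Min S..Max S}" and c20: "card S \<ge> 20"
    and T: "T \<in> {step_left S, step_right S}"
  shows "finite T \<and> T \<noteq> {} \<and> T = grid l r eps \<inter> {Min T..Max T} \<and>
         Max T - Min T \<le> 0.8 * (Max S - Min S)"
proof -
  define G where "G = grid l r eps"
  define m where "m = Min S"
  define M where "M = Max S"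
  define D where "D = M - m"
  have mS: "m \<in> S" and MS: "M \<in> S" using fin ne unfolding m_def M_def by auto
  have SG: "S \<subseteq> G" using contig unfolding G_def by blast
  have bnd: "\<forall>p\<in>S. m \<le> p \<and> p \<le> M" using fin unfolding m_def M_def by auto
  have cS: "S = G \<inter> {m..M}" using contig unfolding G_def m_def M_def by simp
  have ml: "l \<le> m" using grid_ge_l[of eps l m r] e l mS SG unfolding G_def by auto
  have "M \<ge> m * (1+eps)^19"
    using card_span[of eps l S r m M] e l SG mS MS bnd c20 unfolding G_def by auto
  moreover have "(1+eps)^19 \<ge> 1 + 19 * eps" using Bernoulli_inequality[of eps 19] e by simp
  moreover have "m > 0" using ml l by simp
  ultimately have "M \<ge> m * (1 + 19*eps)"
    by (meson mult_left_mono order_trans less_imp_le)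
  hence Dbig: "D \<ge> 19 * eps * m" unfolding D_def by (simp add: algebra_simps)
  have Dpos: "D > 0" using Dbig e \<open>m > 0\<close> by (smt (verit) mult_pos_pos)
  show ?thesis
  proof (cases "T = step_left S")
    case True
    define B where "B = {p\<in>S. p > m + 0.5 * D}"
    have MB: "M \<in> B" using MS Dpos unfolding B_def D_def by (auto simp: field_simps)
    have finB: "finite B" using fin unfolding B_def by auto
    define b where "b = Min B"
    have bB: "b \<in> B" using finB MB unfolding b_def using Min_in by blast
    have bmin: "\<And>p. p \<in> B \<Longrightarrow> b \<le> p" using finB unfolding b_def by auto
    have pb: "pt_b S = b" unfolding pt_b_def b_def B_def m_def M_def D_def by simp
    have bS: "b \<in> S" and bgt: "b > m + 0.5*D" using bB unfolding B_def by auto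
    have bM: "b \<le> M" using bnd bS by auto
    have Teq: "T = G \<inter> {m..b}" using True pb cS bM unfolding step_left_def m_def[symmetric] by auto
    have mT: "m \<in> T" and bT: "b \<in> T" using Teq mS bS SG bgt Dpos by auto
    have finT: "finite T" using Teq grid_finite[OF e(1) l, of r] unfolding G_def by auto
    have minT: "Min T = m" using Teq mT finT by (intro Min_eqI) auto
    have maxT: "Max T = b" using Teq bT finT by (intro Max_eqI) auto
    obtain k where k: "b = (1+eps)^k * l" "b \<le> r" using bS SG unfolding G_def grid_def by auto
    have "k \<noteq> 0" proof assume "k = 0" then show False using k bgt ml Dpos by simp qed
    then obtain j where j: "k = Suc j" by (cases k) auto
    define p' where "p' = (1+eps)^j * l"
    have bq: "b = (1+eps) * p'" using k j unfolding p'_def by simp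
    have p'pos: "p' > 0" using e l unfolding p'_def by simp
    have p'b: "p' < b" using bq p'pos e by simp
    have "p' \<le> m + 0.5 * D"
    proof (rule ccontr)
      assume "\<not> ?thesis"
      hence gt: "p' > m + 0.5*D" by simp
      have "p' \<in> G" using p'b k unfolding G_def grid_def p'_def by auto
      hence "p' \<in> S" using cS gt Dpos p'b bM by auto
      hence "p' \<in> B" using gt unfolding B_def by auto
      thus False using bmin p'b by fastforce
    qed
    hence "b \<le> (1+eps) * (m + 0.5*D)" using bq e by (simp add: mult_left_mono)
    hence h1: "b - m \<le> eps * m + D/2 + (eps * D)/2" by (simp add: algebra_simps add_divide_distrib)
    have h2: "eps * D \<le> D/10" using e Dpos by (simp add: mult_right_mono)
    have h3: "eps * m \<le> D / 19" using Dbig by simp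
    from h1 h2 h3 Dpos have "b - m \<le> 0.8 * D" by linarith
    then show ?thesis using finT mT Teq minT maxT unfolding D_def M_def m_def G_def by auto
  next
    case False
    hence True: "T = step_right S" using T by auto
    define A where "A = {p\<in>S. p > m + 0.2 * D}"
    have MA: "M \<in> A" using MS Dpos unfolding A_def D_def by (auto simp: field_simps)
    have finA: "finite A" using fin unfolding A_def by auto
    define a where "a = Min A"
    have aA: "a \<in> A" using finA MA unfolding a_def using Min_in by blast
    have aM: "a \<le> M" using finA MA unfolding a_def by auto
    have pa: "pt_a S = a" unfolding pt_a_def a_def A_def m_def M_def D_def by simp
    have aS: "a \<in> S" and agt: "a > m + 0.2*D" using aA unfolding A_def by auto
    have Teq: "T = G \<inter> {a..M}" using True pa cS agt Dpos unfolding step_right_def M_def[symmetric] by auto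
    have aT: "a \<in> T" and MT: "M \<in> T" using Teq aS MS SG aM by auto
    have finT: "finite T" using Teq grid_finite[OF e(1) l, of r] unfolding G_def by auto
    have minT: "Min T = a" using Teq aT finT by (intro Min_eqI) auto
    have maxT: "Max T = M" using Teq MT finT by (intro Max_eqI) auto
    have "M - a \<le> 0.8 * D" using agt unfolding D_def by (simp add: field_simps)
    then show ?thesis using finT aT Teq minT maxT unfolding D_def M_def m_def G_def by auto
  qed
qed


lemma invariant:
  fixes l r eps :: real and S :: "nat \<Rightarrow> real set" and n :: nat
  assumes e: "0 < eps" "eps \<le> 0.1" and l: "0 < l" "l \<le> r"
    and tr: "alg_U_trajectory l r eps S"
    and c: "\<forall>i\<in>{1..n}. card (S i) \<ge> 20"
  shows "Suc j \<le> n \<Longrightarrow> finite (S (Suc j)) \<and> S (Suc j) \<noteq> {} \<and>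
     S (Suc j) = grid l r eps \<inter> {Min (S (Suc j))..Max (S (Suc j))} \<and>
     Max (S (Suc j)) - Min (S (Suc j)) \<le> 0.8^j * (r - l)"
proof (induction j)
  case 0
  have S1: "S 1 = grid l r eps" using tr unfolding alg_U_trajectory_def by simp
  have fin: "finite (grid l r eps)" using grid_finite e l by simp
  have lin: "l \<in> grid l r eps" using l unfolding grid_def by (auto intro: exI[of _ 0])
  have mn: "Min (grid l r eps) = l" using fin lin grid_ge_l[OF e(1) l(1)] by (intro Min_eqI) auto
  have "Max (grid l r eps) \<in> grid l r eps" using fin lin Max_in by blast
  hence mx: "Max (grid l r eps) \<le> r" unfolding grid_def by auto
  have "grid l r eps = grid l r eps \<inter> {Min (grid l r eps)..Max (grid l r eps)}"
    using fin by auto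
  then show ?case using S1 fin lin mn mx by auto
next
  case (Suc j)
  have IH: "finite (S (Suc j)) \<and> S (Suc j) \<noteq> {} \<and>
     S (Suc j) = grid l r eps \<inter> {Min (S (Suc j))..Max (S (Suc j))} \<and>
     Max (S (Suc j)) - Min (S (Suc j)) \<le> 0.8^j * (r - l)" using Suc by simp
  have c20: "card (S (Suc j)) \<ge> 20" using c Suc.prems by auto
  have T: "S (Suc (Suc j)) \<in> {step_left (S (Suc j)), step_right (S (Suc j))}"
    using tr c20 unfolding alg_U_trajectory_def by auto
  have "finite (S (Suc (Suc j))) \<and> S (Suc (Suc j)) \<noteq> {} \<and>
     S (Suc (Suc j)) = grid l r eps \<inter> {Min (S (Suc (Suc j)))..Max (S (Suc (Suc j)))} \<and>
     Max (S (Suc (Suc j))) - Min (S (Suc (Suc j))) \<le> 0.8 * (Max (S (Suc j)) - Min (S (Suc j)))"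
    using step_lemma[OF e l(1) _ _ _ c20 T] IH by blast
  moreover have "0.8 * (Max (S (Suc j)) - Min (S (Suc j))) \<le> 0.8 * (0.8^j * (r - l))"
    using IH by simp
  ultimately show ?case by simp
qed

theorem lemma3p3:
  fixes l r eps :: real and S :: "nat \<Rightarrow> real set" and n :: nat
  assumes "0 < eps" "eps \<le> 0.1" "0 < l" "l \<le> r"
    and "alg_U_trajectory l r eps S"
    and "\<forall>i\<in>{1..n}. card (S i) \<ge> 20"
  shows "real n \<le> R_tilde l r eps"
proof -
  define L where "L = ln (r / l)"
  define E where "E = ln (1 / eps)"
  have L0: "L \<ge> 0" unfolding L_def using assms by simp
  have "ln eps \<le> eps - 1" using ln_le_minus_one assms by simp
  hence E9: "E \<ge> 0.9" unfolding E_def using assms by (simp add: ln_div)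
  have bound: "real n \<le> 1 + 5 * L + 5 * E"
  proof (cases n)
    case 0
    then show ?thesis using L0 E9 by simp
  next
    case (Suc j)
    have sj: "Suc j \<le> n" using Suc by simp
    note inv = invariant[OF assms sj]
    define T where "T = S (Suc j)"
    define m where "m = Min T"
    define M where "M = Max T"
    have finT: "finite T" and neT: "T \<noteq> {}" using inv unfolding T_def by auto
    have mT: "m \<in> T" and MT: "M \<in> T" using finT neT unfolding m_def M_def by auto
    have TG: "T \<subseteq> grid l r eps" using inv unfolding T_def by blast
    have bnd: "\<forall>p\<in>T. m \<le> p \<and> p \<le> M" using finT unfolding m_def M_def by auto
    have c20: "card T \<ge> 20" using assms(6) Suc unfolding T_def by auto
    have ml: "l \<le> m" using grid_ge_l[OF assms(1) assms(3)] mT TG by auto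
    have "M \<ge> m * (1+eps)^19"
      using card_span[OF assms(1) assms(3) TG _ _ bnd c20] mT MT TG by auto
    moreover have "(1+eps)^19 \<ge> 1 + 19 * eps" using Bernoulli_inequality[of eps 19] assms by simp
    moreover have "m > 0" using ml assms by simp
    ultimately have "M \<ge> m * (1 + 19*eps)"
      by (meson mult_left_mono order_trans less_imp_le)
    hence "M - m \<ge> 19 * eps * m" by (simp add: algebra_simps)
    moreover have "19 * eps * m \<ge> 19 * eps * l" using ml assms by simp
    moreover have "M - m \<le> 0.8^j * (r - l)" using inv unfolding M_def m_def T_def by simp
    moreover have "0.8^j * (r - l) \<le> 0.8^j * r" using assms by simp
    ultimately have key: "19 * eps * l \<le> 0.8^j * r" by linarith
    have pos: "0 < 19 * eps * l" using assms by simp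
    have pos2: "0 < 0.8^j * r" using assms by simp
    have lnle: "ln (19 * eps * l) \<le> ln (0.8^j * r)" using ln_le_cancel_iff[OF pos pos2] key by blast
    have e1: "ln (19 * eps * l) = ln 19 + ln eps + ln l" using assms by (simp add: ln_mult)
    have e2: "ln (0.8^j * r) = real j * ln 0.8 + ln r" using assms by (simp add: ln_mult ln_realpow)
    have l8: "ln (0.8::real) \<le> -0.2" using ln_le_minus_one[of "0.8::real"] by simp
    have "real j * ln 0.8 \<le> real j * (-0.2)" using l8 by (intro mult_left_mono) auto
    moreover have "ln (19::real) \<ge> 0" by simp
    moreover have "L = ln r - ln l" unfolding L_def using assms by (simp add: ln_div)
    moreover have "E = - ln eps" unfolding E_def using assms by (simp add: ln_div)
    ultimately have "real j * 0.2 \<le> L + E" using lnle e1 e2 by linarith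
    then show ?thesis using Suc by simp
  qed
  have "L * 5 \<le> L * (44 * E)" using L0 E9 by (intro mult_left_mono) auto
  hence "5 * L \<le> 44 * L * E" by (simp add: algebra_simps)
  moreover have "0 \<le> 22 * L^2" by simp
  ultimately show ?thesis unfolding R_tilde_def L_def[symmetric] E_def[symmetric]
    using bound E9 by linarith
qed

end
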